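(* Let $G$ be a finite abelian group and $T \subsetneq G$ a non-empty subset. Then there is a set $A \subset G$ with $T \subsetneq A$ having the following property: given any $d_0 \ge 1$, there exist some $d \ge d_0$ and a family $\mathcal{F}$ consisting of at least $d_0$ pairwise disjoint subsets of $A^d$ such that the set $G \times \left(A^d \setminus \bigcup_{S\in\mathcal{S}} S\right) \subset G^{d+1}$ is $T$-tilable whenever $\mathcal{S} \subset \mathcal{F}$ satisfies $|\mathcal{S}| \equiv 1 \pmod{|T|}$.
   Context: For an abelian group $G$, a non-empty subset $T\subset G$ and $e\ge1$, let $\mathsf{T}_j \subset G^e$ ($1\le j\le e$) be the set of points whose $j$-th coordinate lies in $T$ and whose other coordinates are $0$. A copy of $T$ in $G^e$ is any translate $\mathsf{T}_j + x$ with $x \in G^e$ and $1 \le j \le e$. A subset of $G^e$ is $T$-tilable if it is a disjoint union of copies of $T$. *)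

theory Defs
  imports Main
begin

text \<open>Points of \<open>G^e\<close> are lists of length \<open>e\<close>; coordinates are indexed \<open>0..<e\<close>.\<close>

definition power_set :: "'g set \<Rightarrow> nat \<Rightarrow> 'g list set" where
  "power_set A e = {xs. length xs = e \<and> set xs \<subseteq> A}"

definition copy_of :: "'g::ab_group_add set \<Rightarrow> nat \<Rightarrow> 'g list \<Rightarrow> 'g list set" where
  "copy_of T j x = {x[j := x ! j + t] | t. t \<in> T}"

definition copies :: "'g::ab_group_add set \<Rightarrow> nat \<Rightarrow> 'g list set set" where
  "copies T e = {copy_of T j x | j x. j < e \<and> length x = e}"

definition tilable :: "'g::ab_group_add set \<Rightarrow> nat \<Rightarrow> 'g list set \<Rightarrow> bool" where
  "tilable T e X \<longleftrightarrow> (\<exists>C. C \<subseteq> copies T e \<and> pairwise disjnt C \<and> \<Union>C = X)"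

end

theory Submission
  imports Defs
begin


lemma tilable_rule:
  fixes T :: "'g::ab_group_add set" and X :: "'g list set"
  assumes len: "\<And>y. y \<in> X \<Longrightarrow> length y = e"
  and dr: "\<And>y. y \<in> X \<Longrightarrow> dr y < e"
  and inT: "\<And>y. y \<in> X \<Longrightarrow> y ! dr y - bs y \<in> T"
  and cl: "\<And>y t. y \<in> X \<Longrightarrow> t \<in> T \<Longrightarrow> y[dr y := bs y + t] \<in> X \<and>
            dr (y[dr y := bs y + t]) = dr y \<and> bs (y[dr y := bs y + t]) = bs y"
  shows "tilable T e X"
proof -
  define C where "C = (\<lambda>y. copy_of T (dr y) (y[dr y := bs y])) ` X"
  have cp: "copy_of T (dr y) (y[dr y := bs y]) = {y[dr y := bs y + t] | t. t \<in> T}" if "y \<in> X" for y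
    using dr[OF that] len[OF that] by (simp add: copy_of_def)
  have "C \<subseteq> copies T e"
    unfolding C_def copies_def using dr len by fastforce
  moreover have "\<Union>C = X"
  proof
    show "\<Union>C \<subseteq> X" unfolding C_def using cp cl by auto
    show "X \<subseteq> \<Union>C"
    proof
      fix y assume y: "y \<in> X"
      have "y = y[dr y := bs y + (y ! dr y - bs y)]" by simp
      then have "y \<in> copy_of T (dr y) (y[dr y := bs y])" using cp[OF y] inT[OF y] by blast
      then show "y \<in> \<Union>C" unfolding C_def using y by blast
    qed
  qed
  moreover have "pairwise disjnt C"
  proof (rule pairwiseI)
    fix c1 c2 assume c1: "c1 \<in> C" and c2: "c2 \<in> C" and ne: "c1 \<noteq> c2"
    obtain y1 where y1: "y1 \<in> X" "c1 = {y1[dr y1 := bs y1 + t] | t. t \<in> T}" using c1 cp unfolding C_def by auto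
    obtain y2 where y2: "y2 \<in> X" "c2 = {y2[dr y2 := bs y2 + t] | t. t \<in> T}" using c2 cp unfolding C_def by auto
    show "disjnt c1 c2"
    proof (rule ccontr)
      assume "\<not> disjnt c1 c2"
      then obtain w where w1: "w \<in> c1" and w2: "w \<in> c2" by (auto simp: disjnt_def)
      obtain t1 where t1: "t1 \<in> T" "w = y1[dr y1 := bs y1 + t1]" using w1 y1 by auto
      obtain t2 where t2: "t2 \<in> T" "w = y2[dr y2 := bs y2 + t2]" using w2 y2 by auto
      have e1: "dr w = dr y1" "bs w = bs y1" using cl[OF y1(1) t1(1)] t1(2) by auto
      have e2: "dr w = dr y2" "bs w = bs y2" using cl[OF y2(1) t2(1)] t2(2) by auto
      have "c1 = {w[dr w := bs w + t] | t. t \<in> T}" using y1(2) t1(2) e1 by simp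
      moreover have "c2 = {w[dr w := bs w + t] | t. t \<in> T}" using y2(2) t2(2) e2 by simp
      ultimately show False using ne by simp
    qed
  qed
  ultimately show ?thesis unfolding tilable_def by blast
qed



locale lay =
  fixes T Qs Os Ps :: "'g::ab_group_add set" and s :: 'g and d :: nat
    and I J :: "nat set" and j0 :: nat and pi pii :: "nat \<Rightarrow> nat"
  assumes TQO: "T = Qs \<union> Os" and Ts: "(\<lambda>t. s + t) ` T = Os \<union> Ps"
  and dQO: "Qs \<inter> Os = {}" and dQP: "Qs \<inter> Ps = {}" and dOP: "Os \<inter> Ps = {}"
  and Id: "I \<subseteq> {..<d}" and Jd: "J \<subseteq> {..<d}" and IJ: "I \<inter> J = {}" and j0: "j0 \<in> J"
  and piI: "\<And>i. i \<in> I \<Longrightarrow> pi i \<in> J \<and> pi i \<noteq> j0 \<and> i < pi i \<and> pii (pi i) = i"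
  and piiJ: "\<And>j. j \<in> J \<Longrightarrow> j \<noteq> j0 \<Longrightarrow> pii j \<in> I \<and> pi (pii j) = j"
begin

definition nq :: "'g list \<Rightarrow> nat set" where "nq y = {l. l < length y \<and> y ! l \<notin> Qs}"

definition bx :: "'g set \<Rightarrow> nat \<Rightarrow> 'g list set" where
  "bx V j = {y. length y = d \<and> y ! j \<in> V \<and> (\<forall>l<d. l \<noteq> j \<longrightarrow> y ! l \<in> Qs)}"

definition Lam :: "'g list set" where
  "Lam = {y. length y = d \<and> set y \<subseteq> Qs \<union> Os \<union> Ps \<and> (\<forall>j\<in>J. y \<notin> bx Ps j) \<and> (\<forall>i\<in>I. y \<notin> bx Os i)}"

definition ldir :: "'g list \<Rightarrow> nat" where
  "ldir y = (let N = nq y; f = Min N in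
     if N = {} then j0
     else if card N = 1 then (if f = j0 then j0 else if f \<in> J then pii f else if f \<in> I then pi f else f)
     else if f \<in> I \<and> N = {f, pi f} \<and> y ! (pi f) \<in> Os then (if y ! f \<in> Os then f else pi f)
     else f)"

definition lbas :: "'g list \<Rightarrow> 'g" where
  "lbas y = (let N = nq y; f = Min N in
     if N = {} then 0
     else if card N = 1 then (if f \<in> J \<or> f \<in> I then 0 else s)
     else if f \<in> I \<and> N = {f, pi f} \<and> y ! (pi f) \<in> Os then 0
     else s)"

lemma nq_fin: "finite (nq y)" unfolding nq_def by auto
lemma nq_sub: "nq y \<subseteq> {..<length y}" unfolding nq_def by auto

lemma nq_upd: "p < length y \<Longrightarrow> nq (y[p := v]) = (if v \<in> Qs then nq y - {p} else insert p (nq y))"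
  unfolding nq_def by (auto simp: nth_list_update)

lemma bx_iff: assumes "length y = d" "j < d" "V \<inter> Qs = {}"
  shows "y \<in> bx V j \<longleftrightarrow> nq y = {j} \<and> y ! j \<in> V"
  using assms unfolding bx_def nq_def by auto

lemma ld_empty: "nq y = {} \<Longrightarrow> ldir y = j0 \<and> lbas y = 0"
  unfolding ldir_def lbas_def by simp

lemma ld_single: "nq y = {f} \<Longrightarrow> ldir y = (if f = j0 then j0 else if f \<in> J then pii f else if f \<in> I then pi f else f)
   \<and> lbas y = (if f \<in> J \<or> f \<in> I then 0 else s)"
  unfolding ldir_def lbas_def by simp

lemma two_facts: "f \<in> I \<Longrightarrow> card {f, pi f} = 2 \<and> Min {f, pi f} = f"
  using piI[of f] by auto

lemma ld_two: "f \<in> I \<Longrightarrow> nq y = {f, pi f} \<Longrightarrow> y ! (pi f) \<in> Os \<Longrightarrow>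
   ldir y = (if y ! f \<in> Os then f else pi f) \<and> lbas y = 0"
  using two_facts[of f] unfolding ldir_def lbas_def by (simp add: Let_def)

lemma ld_gen: "card (nq y) \<ge> 2 \<Longrightarrow>
   \<not> (Min (nq y) \<in> I \<and> nq y = {Min (nq y), pi (Min (nq y))} \<and> y ! (pi (Min (nq y))) \<in> Os) \<Longrightarrow>
   ldir y = Min (nq y) \<and> lbas y = s"
  unfolding ldir_def lbas_def by (auto simp: Let_def)


lemma Lam_iff: "y \<in> Lam \<longleftrightarrow> length y = d \<and> set y \<subseteq> Qs \<union> Os \<union> Ps \<and>
   \<not> (\<exists>j\<in>J. nq y = {j} \<and> y ! j \<in> Ps) \<and> \<not> (\<exists>i\<in>I. nq y = {i} \<and> y ! i \<in> Os)"
proof -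
  have a: "length y = d \<Longrightarrow> j \<in> J \<Longrightarrow> y \<in> bx Ps j \<longleftrightarrow> nq y = {j} \<and> y ! j \<in> Ps" for j
    by (rule bx_iff) (use Jd dQP in auto)
  have b: "length y = d \<Longrightarrow> i \<in> I \<Longrightarrow> y \<in> bx Os i \<longleftrightarrow> nq y = {i} \<and> y ! i \<in> Os" for i
    by (rule bx_iff) (use Id dQO in auto)
  show ?thesis unfolding Lam_def using a b by auto
qed

lemma T_cases: "t \<in> T \<Longrightarrow> t \<in> Qs \<or> t \<in> Os" using TQO by auto
lemma sT: "t \<in> T \<Longrightarrow> s + t \<in> Os \<or> s + t \<in> Ps" using Ts by auto
lemma QsT: "x \<in> Qs \<Longrightarrow> x \<in> T" using TQO by auto
lemma OsT: "x \<in> Os \<Longrightarrow> x \<in> T" using TQO by auto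
lemma OPs: "x \<in> Os \<or> x \<in> Ps \<Longrightarrow> x - s \<in> T"
proof -
  assume "x \<in> Os \<or> x \<in> Ps"
  then have "x \<in> (\<lambda>t. s + t) ` T" using Ts by auto
  then obtain t where "t \<in> T" "x = s + t" by auto
  then show ?thesis by (simp add: algebra_simps)
qed

lemma set_upd_sub: "set y \<subseteq> X \<Longrightarrow> v \<in> X \<Longrightarrow> set (y[p := v]) \<subseteq> X"
  by (metis insert_subset set_update_subset_insert subset_trans)

lemma Lam_updI:
  assumes y: "y \<in> Lam" and p: "p < d" and v: "v \<in> Qs \<union> Os \<union> Ps"
  and hJ: "\<And>j. j \<in> J \<Longrightarrow> nq (y[p:=v]) = {j} \<Longrightarrow> y[p:=v] ! j \<notin> Ps"
  and hI: "\<And>i. i \<in> I \<Longrightarrow> nq (y[p:=v]) = {i} \<Longrightarrow> y[p:=v] ! i \<notin> Os"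
  shows "y[p:=v] \<in> Lam"
proof -
  have "length y = d" "set y \<subseteq> Qs \<union> Os \<union> Ps" using y unfolding Lam_iff by auto
  then have "length (y[p:=v]) = d" "set (y[p:=v]) \<subseteq> Qs \<union> Os \<union> Ps" using set_upd_sub[OF _ v] by auto
  then show ?thesis unfolding Lam_iff using hJ hI by blast
qed

lemma closure:
  assumes y: "y \<in> Lam"
  shows "ldir y < d \<and> y ! ldir y - lbas y \<in> T \<and>
    (\<forall>t\<in>T. y[ldir y := lbas y + t] \<in> Lam \<and> ldir (y[ldir y := lbas y + t]) = ldir y
       \<and> lbas (y[ldir y := lbas y + t]) = lbas y)"
proof -
  have len: "length y = d" and sy: "set y \<subseteq> Qs \<union> Os \<union> Ps"
    and nC: "\<And>j. j \<in> J \<Longrightarrow> nq y = {j} \<Longrightarrow> y ! j \<notin> Ps"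
    and nO: "\<And>i. i \<in> I \<Longrightarrow> nq y = {i} \<Longrightarrow> y ! i \<notin> Os"
    using y unfolding Lam_iff by auto
  have yA: "\<And>l. l < d \<Longrightarrow> y ! l \<in> Qs \<or> y ! l \<in> Os \<or> y ! l \<in> Ps"
    using sy len by (auto simp: set_conv_nth)
  have nqd: "\<And>l. l \<in> nq y \<Longrightarrow> l < d \<and> y ! l \<notin> Qs" using len unfolding nq_def by auto
  have nqd2: "\<And>l. l < d \<Longrightarrow> l \<notin> nq y \<Longrightarrow> y ! l \<in> Qs" using len unfolding nq_def by auto
  have j0d: "j0 < d" using j0 Jd by auto
  consider (E) "nq y = {}" | (S) f where "nq y = {f}" | (M) "card (nq y) \<ge> 2"
  proof -
    have "card (nq y) = 0 \<or> card (nq y) = 1 \<or> card (nq y) \<ge> 2" by arith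
    moreover have "card (nq y) = 0 \<Longrightarrow> nq y = {}" using nq_fin[of y] by simp
    moreover have "card (nq y) = 1 \<Longrightarrow> \<exists>f. nq y = {f}" using card_1_singletonE by blast
    ultimately show "(nq y = {} \<Longrightarrow> thesis) \<Longrightarrow> (\<And>f. nq y = {f} \<Longrightarrow> thesis) \<Longrightarrow> (2 \<le> card (nq y) \<Longrightarrow> thesis) \<Longrightarrow> thesis" by blast
  qed
  then show ?thesis
  proof cases
    case E
    have ld: "ldir y = j0" "lbas y = 0" using ld_empty[OF E] by auto
    have yj0: "y ! j0 \<in> Qs" using nqd2[OF j0d] E by auto
    show ?thesis
    proof (simp only: ld, intro conjI ballI)
      show "j0 < d" by (rule j0d)
      show "y ! j0 - 0 \<in> T" using yj0 QsT by simp
      fix t assume t: "t \<in> T"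
      have nq': "nq (y[j0 := 0 + t]) = (if t \<in> Qs then {} else {j0})"
        using nq_upd[of j0 y t] len j0d E by simp
      show "y[j0 := 0 + t] \<in> Lam"
proof (rule Lam_updI[OF y])
  show "j0 < d" by (rule j0d)
  show "0 + t \<in> Qs \<union> Os \<union> Ps" using T_cases[OF t] by auto
next
  fix jj assume jJ: "jj \<in> J" and nj: "nq (y[j0 := 0 + t]) = {jj}"
  show "y[j0 := 0 + t] ! jj \<notin> Ps" using nj nq' len j0d T_cases[OF t] dOP by (auto split: if_splits)
next
  fix i' assume iI: "i' \<in> I" and ni: "nq (y[j0 := 0 + t]) = {i'}"
  show "y[j0 := 0 + t] ! i' \<notin> Os" using ni nq' iI IJ j0 by (auto split: if_splits)
qed
      show "ldir (y[j0 := 0 + t]) = j0" "lbas (y[j0 := 0 + t]) = 0"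
        using nq' ld_empty ld_single[of _ j0] j0 by (auto split: if_splits)
    qed
  next
    case (S f)
    have fd: "f < d" and yf: "y ! f \<notin> Qs" using nqd S by auto
    have oth: "\<And>l. l < d \<Longrightarrow> l \<noteq> f \<Longrightarrow> y ! l \<in> Qs" using nqd2 S by auto
    have ls: "ldir y = (if f = j0 then j0 else if f \<in> J then pii f else if f \<in> I then pi f else f)"
      "lbas y = (if f \<in> J \<or> f \<in> I then 0 else s)" using ld_single[OF S] by auto
    consider (a) "f = j0" | (b) "f \<in> J" "f \<noteq> j0" | (c) "f \<in> I" | (d) "f \<notin> I" "f \<notin> J"
      using j0 by blast
    then show ?thesis
    proof cases
      case a
      have ld: "ldir y = j0" "lbas y = 0" using ls a j0 by auto
      have yO: "y ! j0 \<in> Os" using yA[OF fd] yf nC[OF j0] S a by auto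
      show ?thesis
      proof (simp only: ld, intro conjI ballI)
        show "j0 < d" by (rule j0d)
        show "y ! j0 - 0 \<in> T" using yO OsT by simp
        fix t assume t: "t \<in> T"
        have nq': "nq (y[j0 := 0 + t]) = (if t \<in> Qs then {} else {j0})"
          using nq_upd[of j0 y t] len j0d S a by auto
        show "y[j0 := 0 + t] \<in> Lam"
proof (rule Lam_updI[OF y])
  show "j0 < d" by (rule j0d)
  show "0 + t \<in> Qs \<union> Os \<union> Ps" using T_cases[OF t] by auto
next
  fix jj assume jJ: "jj \<in> J" and nj: "nq (y[j0 := 0 + t]) = {jj}"
  show "y[j0 := 0 + t] ! jj \<notin> Ps" using nj nq' len j0d T_cases[OF t] dOP by (auto split: if_splits)
next
  fix i' assume iI: "i' \<in> I" and ni: "nq (y[j0 := 0 + t]) = {i'}"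
  show "y[j0 := 0 + t] ! i' \<notin> Os" using ni nq' iI IJ j0 by (auto split: if_splits)
qed
        show "ldir (y[j0 := 0 + t]) = j0" "lbas (y[j0 := 0 + t]) = 0"
          using nq' ld_empty ld_single[of _ j0] j0 by (auto split: if_splits)
      qed
    next
      case b
      define i where "i = pii f"
      have i: "i \<in> I" "pi i = f" using piiJ[OF b] i_def by auto
      have il: "i < f" "i \<noteq> f" using piI[OF i(1)] i by auto
      have id: "i < d" using il fd by auto
      have ld: "ldir y = i" "lbas y = 0" using ls b i_def by auto
      have yO: "y ! f \<in> Os" using yA[OF fd] yf nC[OF b(1) S] by auto
      have yi: "y ! i \<in> Qs" using oth[OF id il(2)] .
      show ?thesis
      proof (simp only: ld, intro conjI ballI)
        show "i < d" by (rule id)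
        show "y ! i - 0 \<in> T" using yi QsT by simp
        fix t assume t: "t \<in> T"
        have nq': "nq (y[i := 0 + t]) = (if t \<in> Qs then {f} else {i, f})"
          using nq_upd[of i y t] len id S il by auto
        have e': "y[i := 0 + t] ! f = y ! f" using il by simp
        have e'': "y[i := 0 + t] ! i = t" using id len by simp
        show "y[i := 0 + t] \<in> Lam"
proof (rule Lam_updI[OF y])
  show "i < d" by (rule id)
  show "0 + t \<in> Qs \<union> Os \<union> Ps" using T_cases[OF t] by auto
next
  fix jj assume jJ: "jj \<in> J" and nj: "nq (y[i := 0 + t]) = {jj}"
  show "y[i := 0 + t] ! jj \<notin> Ps" using nj nq' e' yO dOP il by (auto split: if_splits simp: doubleton_eq_iff)
next
  fix i' assume iI: "i' \<in> I" and ni: "nq (y[i := 0 + t]) = {i'}"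
  show "y[i := 0 + t] ! i' \<notin> Os" using ni nq' iI IJ b il by (auto split: if_splits simp: doubleton_eq_iff)
qed
        have DB: "ldir (y[i := 0 + t]) = i \<and> lbas (y[i := 0 + t]) = 0"
        proof (cases "t \<in> Qs")
          case True
          then show ?thesis using nq' ld_single[of "y[i := 0 + t]" f] b i_def by auto
        next
          case False
          then have tO: "t \<in> Os" using T_cases[OF t] by auto
          have "nq (y[i := 0 + t]) = {i, pi i}" using nq' False i by auto
          then show ?thesis using ld_two[OF i(1)] e' e'' i yO tO by auto
        qed
        then show "ldir (y[i := 0 + t]) = i" "lbas (y[i := 0 + t]) = 0" by auto
      qed
    next
      case c
      define j where "j = pi f"
      have j: "j \<in> J" "j \<noteq> j0" "f < j" "pii j = f" using piI[OF c] j_def by auto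
      have jd: "j < d" using j Jd by auto
      have ld: "ldir y = j" "lbas y = 0" using ls c IJ j0 j_def by auto
      have yP: "y ! f \<in> Ps" using yA[OF fd] yf nO[OF c S] by auto
      have yj: "y ! j \<in> Qs" using oth[OF jd] j by auto
      show ?thesis
      proof (simp only: ld, intro conjI ballI)
        show "j < d" by (rule jd)
        show "y ! j - 0 \<in> T" using yj QsT by simp
        fix t assume t: "t \<in> T"
        have nq': "nq (y[j := 0 + t]) = (if t \<in> Qs then {f} else {f, j})"
          using nq_upd[of j y t] len jd S j by auto
        have e': "y[j := 0 + t] ! f = y ! f" using j by simp
        have e'': "y[j := 0 + t] ! j = t" using jd len by simp
        show "y[j := 0 + t] \<in> Lam"
proof (rule Lam_updI[OF y])
  show "j < d" by (rule jd)
  show "0 + t \<in> Qs \<union> Os \<union> Ps" using T_cases[OF t] by auto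
next
  fix jj assume jJ: "jj \<in> J" and nj: "nq (y[j := 0 + t]) = {jj}"
  have "jj = f" using nj nq' j(3) by (cases "t \<in> Qs") auto
  then show "y[j := 0 + t] ! jj \<notin> Ps" using jJ IJ c by auto
next
  fix i' assume iI: "i' \<in> I" and ni: "nq (y[j := 0 + t]) = {i'}"
  have "i' = f" using ni nq' j(3) by (cases "t \<in> Qs") auto
  then show "y[j := 0 + t] ! i' \<notin> Os" using e' yP dOP by auto
qed
        have DB: "ldir (y[j := 0 + t]) = j \<and> lbas (y[j := 0 + t]) = 0"
        proof (cases "t \<in> Qs")
          case True
          then have "nq (y[j := 0 + t]) = {f}" using nq' by simp
          moreover have "f \<noteq> j0" "f \<notin> J" using c IJ j0 by auto
          ultimately show ?thesis using ld_single[of "y[j := 0 + t]" f] c j_def by simp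
        next
          case False
          then have tO: "t \<in> Os" using T_cases[OF t] by auto
          have "nq (y[j := 0 + t]) = {f, pi f}" using nq' False j_def by auto
          then show ?thesis using ld_two[OF c] e' e'' j_def yP tO dOP by auto
        qed
        then show "ldir (y[j := 0 + t]) = j" "lbas (y[j := 0 + t]) = 0" by auto
      qed
    next
      case d
      have ld: "ldir y = f" "lbas y = s" using ls d by auto
      have yOP: "y ! f \<in> Os \<or> y ! f \<in> Ps" using yA[OF fd] yf by auto
      show ?thesis
      proof (simp only: ld, intro conjI ballI)
        show "f < d" by (rule fd)
        show "y ! f - s \<in> T" using OPs[OF yOP] .
        fix t assume t: "t \<in> T"
        have st: "s + t \<notin> Qs" "s + t \<in> Qs \<union> Os \<union> Ps" using sT[OF t] dQO dQP by auto
        have nq': "nq (y[f := s + t]) = {f}"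
          using nq_upd[of f y "s + t"] len fd S st by auto
        show "y[f := s + t] \<in> Lam"
proof (rule Lam_updI[OF y])
  show "f < d" by (rule fd)
  show "s + t \<in> Qs \<union> Os \<union> Ps" using st(2) by auto
next
  fix jj assume jJ: "jj \<in> J" and nj: "nq (y[f := s + t]) = {jj}"
  show "y[f := s + t] ! jj \<notin> Ps" using nj nq' jJ d by auto
next
  fix i' assume iI: "i' \<in> I" and ni: "nq (y[f := s + t]) = {i'}"
  show "y[f := s + t] ! i' \<notin> Os" using ni nq' iI d by auto
qed
        show "ldir (y[f := s + t]) = f" "lbas (y[f := s + t]) = s"
          using nq' ld_single[of "y[f := s + t]" f] d by auto
      qed
    qed
  next
    case M
    define f where "f = Min (nq y)"
    have ne: "nq y \<noteq> {}" using M by auto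
    have fin: "f \<in> nq y" using Min_in[OF nq_fin ne] f_def by simp
    have fmin: "\<And>l. l \<in> nq y \<Longrightarrow> f \<le> l" using Min_le[OF nq_fin] f_def by simp
    have fd: "f < d" and yf: "y ! f \<notin> Qs" using nqd fin by auto
    have yfOP: "y ! f \<in> Os \<or> y ! f \<in> Ps" using yA[OF fd] yf by auto
    show ?thesis
    proof (cases "f \<in> I \<and> nq y = {f, pi f} \<and> y ! (pi f) \<in> Os")
      case R2: True
      have fI: "f \<in> I" and nqe: "nq y = {f, pi f}" and yj: "y ! (pi f) \<in> Os" using R2 by auto
      have j: "pi f \<in> J" "pi f \<noteq> j0" "f < pi f" "pii (pi f) = f" using piI[OF fI] by auto
      have jd: "pi f < d" using j Jd by auto
      have ld: "ldir y = (if y ! f \<in> Os then f else pi f)" "lbas y = 0"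
        using ld_two[OF fI nqe yj] by auto
      show ?thesis
      proof (cases "y ! f \<in> Os")
        case True
        show ?thesis
        proof (simp only: ld True if_True, intro conjI ballI)
          show "f < d" by (rule fd)
          show "y ! f - 0 \<in> T" using True OsT by simp
          fix t assume t: "t \<in> T"
          have nq': "nq (y[f := 0 + t]) = (if t \<in> Qs then {pi f} else {f, pi f})"
            using nq_upd[of f y t] len fd nqe j by auto
          have e': "y[f := 0 + t] ! (pi f) = y ! (pi f)" using j by simp
          have e'': "y[f := 0 + t] ! f = t" using fd len by simp
          show "y[f := 0 + t] \<in> Lam"
proof (rule Lam_updI[OF y])
  show "f < d" by (rule fd)
  show "0 + t \<in> Qs \<union> Os \<union> Ps" using T_cases[OF t] by auto
next
  fix jj assume jJ: "jj \<in> J" and nj: "nq (y[f := 0 + t]) = {jj}"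
  show "y[f := 0 + t] ! jj \<notin> Ps" using nj nq' e' yj dOP j by (auto split: if_splits simp: doubleton_eq_iff)
next
  fix i' assume iI: "i' \<in> I" and ni: "nq (y[f := 0 + t]) = {i'}"
  show "y[f := 0 + t] ! i' \<notin> Os" using ni nq' iI IJ j by (auto split: if_splits simp: doubleton_eq_iff)
qed
          have DB: "ldir (y[f := 0 + t]) = f \<and> lbas (y[f := 0 + t]) = 0"
          proof (cases "t \<in> Qs")
            case True
            then show ?thesis using nq' ld_single[of "y[f := 0 + t]" "pi f"] j by auto
          next
            case False
            then have tO: "t \<in> Os" using T_cases[OF t] by auto
            show ?thesis using ld_two[OF fI _ ] nq' False e' e'' yj tO by auto
          qed
          then show "ldir (y[f := 0 + t]) = f" "lbas (y[f := 0 + t]) = 0" by auto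
        qed
      next
        case False
        then have yP: "y ! f \<in> Ps" using yfOP by auto
        show ?thesis
        proof (simp only: ld False if_False, intro conjI ballI)
          show "pi f < d" by (rule jd)
          show "y ! (pi f) - 0 \<in> T" using yj OsT by simp
          fix t assume t: "t \<in> T"
          have nq': "nq (y[pi f := 0 + t]) = (if t \<in> Qs then {f} else {f, pi f})"
            using nq_upd[of "pi f" y t] len jd nqe j by auto
          have e': "y[pi f := 0 + t] ! f = y ! f" using j by simp
          have e'': "y[pi f := 0 + t] ! (pi f) = t" using jd len by simp
          show "y[pi f := 0 + t] \<in> Lam"
proof (rule Lam_updI[OF y])
  show "pi f < d" by (rule jd)
  show "0 + t \<in> Qs \<union> Os \<union> Ps" using T_cases[OF t] by auto
next
  fix jj assume jJ: "jj \<in> J" and nj: "nq (y[pi f := 0 + t]) = {jj}"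
  have "jj = f" using nj nq' j(3) by (cases "t \<in> Qs") auto
  then show "y[pi f := 0 + t] ! jj \<notin> Ps" using jJ IJ fI by auto
next
  fix i' assume iI: "i' \<in> I" and ni: "nq (y[pi f := 0 + t]) = {i'}"
  have "i' = f" using ni nq' j(3) by (cases "t \<in> Qs") auto
  then show "y[pi f := 0 + t] ! i' \<notin> Os" using e' yP dOP by auto
qed
          have DB: "ldir (y[pi f := 0 + t]) = pi f \<and> lbas (y[pi f := 0 + t]) = 0"
          proof (cases "t \<in> Qs")
            case True
            then have "nq (y[pi f := 0 + t]) = {f}" using nq' by simp
            moreover have "f \<noteq> j0" "f \<notin> J" using fI IJ j0 by auto
            ultimately show ?thesis using ld_single[of "y[pi f := 0 + t]" f] fI by simp
          next
            case False
            then have tO: "t \<in> Os" using T_cases[OF t] by auto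
            show ?thesis using ld_two[OF fI _ ] nq' False e' e'' yP tO dOP by auto
          qed
          then show "ldir (y[pi f := 0 + t]) = pi f" "lbas (y[pi f := 0 + t]) = 0" by auto
        qed
      qed
    next
      case R3: False
      have ld: "ldir y = f" "lbas y = s" using ld_gen[OF M] R3 f_def by auto
      show ?thesis
      proof (simp only: ld, intro conjI ballI)
        show "f < d" by (rule fd)
        show "y ! f - s \<in> T" using OPs[OF yfOP] .
        fix t assume t: "t \<in> T"
        have st: "s + t \<notin> Qs" "s + t \<in> Qs \<union> Os \<union> Ps" using sT[OF t] dQO dQP by auto
        have nq': "nq (y[f := s + t]) = nq y"
          using nq_upd[of f y "s + t"] len fd fin st by auto
        have c2: "card (nq (y[f := s + t])) \<ge> 2" using nq' M by simp
        have "\<not> (\<exists>j. nq (y[f := s + t]) = {j})" using c2 by auto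
        then have nsing: "\<not> (\<exists>j. nq (y[f := s + t]) = {j})" .
        show "y[f := s + t] \<in> Lam"
        proof (rule Lam_updI[OF y])
          show "f < d" by (rule fd)
          show "s + t \<in> Qs \<union> Os \<union> Ps" using st(2) by auto
        next
          fix jj assume jJ: "jj \<in> J" and nj: "nq (y[f := s + t]) = {jj}"
          show "y[f := s + t] ! jj \<notin> Ps" using nj nsing by auto
        next
          fix i' assume iI: "i' \<in> I" and ni: "nq (y[f := s + t]) = {i'}"
          show "y[f := s + t] ! i' \<notin> Os" using ni nsing by auto
        qed
        have R3': "\<not> (f \<in> I \<and> nq (y[f := s + t]) = {f, pi f} \<and> y[f := s + t] ! (pi f) \<in> Os)"
        proof
          assume h: "f \<in> I \<and> nq (y[f := s + t]) = {f, pi f} \<and> y[f := s + t] ! (pi f) \<in> Os"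
          then have "pi f \<noteq> f" using piI by fastforce
          then have "y[f := s + t] ! (pi f) = y ! (pi f)" by simp
          then show False using h R3 nq' by auto
        qed
        show "ldir (y[f := s + t]) = f" "lbas (y[f := s + t]) = s"
          using ld_gen[OF c2] R3' nq' f_def by auto
      qed
    qed
  qed
qed

end


definition box :: "'g set \<Rightarrow> nat \<Rightarrow> 'g set \<Rightarrow> nat \<Rightarrow> 'g list set" where
  "box Qs d V j = {y. length y = d \<and> y ! j \<in> V \<and> (\<forall>l<d. l \<noteq> j \<longrightarrow> y ! l \<in> Qs)}"

lemma box_disj: "y \<in> box Qs d V i \<Longrightarrow> y \<in> box Qs d W j \<Longrightarrow> i < d \<Longrightarrow> j < d \<Longrightarrow> Qs \<inter> V = {} \<Longrightarrow> i = j"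
  unfolding box_def by auto

lemma main_tile:
  fixes T Qs Os Ps :: "'g::{ab_group_add,finite} set" and s :: 'g
  assumes TQO: "T = Qs \<union> Os" and Ts: "(\<lambda>t. s + t) ` T = Os \<union> Ps"
  and dQO: "Qs \<inter> Os = {}" and dQP: "Qs \<inter> Ps = {}" and dOP: "Os \<inter> Ps = {}"
  and Tne: "T \<noteq> {}"
  and Ndef: "N = card (UNIV::'g set) * m" and dN: "d = N + m"
  and J: "J \<subseteq> {N..<d}" and Jc: "card J mod card T = 1 mod card T"
  shows "tilable T (Suc d) {g # xs | g xs. xs \<in> power_set (Qs \<union> Os \<union> Ps) d - \<Union> (box Qs d Ps ` J)}"
    (is "tilable T (Suc d) ?Z")
proof -
  define k where "k = card T"
  have k1: "k \<ge> 1" using Tne unfolding k_def by (simp add: card_gt_0_iff Suc_le_eq)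
  have lenZ: "\<And>z. z \<in> ?Z \<Longrightarrow> length z = Suc d" unfolding power_set_def by auto
  show ?thesis
  proof (cases "k = 1")
    case True
    then obtain t0 where t0: "T = {t0}" unfolding k_def using card_1_singletonE by blast
    show ?thesis
    proof (rule tilable_rule[where dr = "\<lambda>z. 0" and bs = "\<lambda>z. z ! 0 - t0"])
      fix z assume "z \<in> ?Z" then show "length z = Suc d" by (rule lenZ)
    next
      fix z assume "z \<in> ?Z" then show "(0::nat) < Suc d" by simp
    next
      fix z assume "z \<in> ?Z" then show "z ! 0 - (z ! 0 - t0) \<in> T" using t0 by simp
    next
      fix z t assume z: "z \<in> ?Z" and t: "t \<in> T"
      have "z[0 := z ! 0 - t0 + t] = z" using t t0 by simp
      then show "z[0 := z ! 0 - t0 + t] \<in> ?Z \<and> (0::nat) = 0 \<and>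
        z[0 := z ! 0 - t0 + t] ! 0 - t0 = z ! 0 - t0" using z by simp
    qed
  next
    case False
    then have k2: "k \<ge> 2" using k1 by simp
    define q where "q = card J div k"
    have finJ: "finite J" using J finite_subset by blast
    have cJ: "card J = k * q + 1"
    proof -
      have "card J mod k = 1" using Jc k2 unfolding k_def by simp
      then show ?thesis unfolding q_def by (metis div_mult_mod_eq mult.commute)
    qed
    have cJm: "card J \<le> m" using card_mono[OF _ J] dN by simp
    have qm: "q \<le> m"
    proof -
      have "q \<le> k * q" using k1 by simp
      then show ?thesis using cJ cJm by linarith
    qed
    have cU: "card ((UNIV::'g set) \<times> {..<q}) \<le> card {..<N}"
      using qm Ndef by (simp add: card_cartesian_product)
    obtain iota :: "'g \<times> nat \<Rightarrow> nat" where iota: "iota ` (UNIV \<times> {..<q}) \<subseteq> {..<N}"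
      "inj_on iota (UNIV \<times> {..<q})"
      using card_le_inj[OF _ _ cU] by auto
    define Ix where "Ix x = iota ` ({g. x - g \<in> T} \<times> {..<q})" for x
    have Jne: "J \<noteq> {}" using cJ by auto
    define j0 where "j0 = Min J"
    have j0J: "j0 \<in> J" using Min_in[OF finJ Jne] j0_def by simp
    have cset: "card {g. x - g \<in> T} = k" for x :: 'g
    proof -
      have "{g. x - g \<in> T} = (\<lambda>t. x - t) ` T" by (force simp: algebra_simps)
      moreover have "inj_on (\<lambda>t. x - t) T" by (rule inj_onI) simp
      ultimately show ?thesis unfolding k_def by (simp add: card_image)
    qed
    have cIx: "card (Ix x) = k * q" for x
    proof -
      have "inj_on iota ({g. x - g \<in> T} \<times> {..<q})" using iota(2) by (rule inj_on_subset) auto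
      then have "card (Ix x) = card ({g. x - g \<in> T} \<times> {..<q})" unfolding Ix_def by (rule card_image)
      also have "\<dots> = k * q" using cset[of x] by (simp add: card_cartesian_product)
      finally show ?thesis .
    qed
    have cJ': "card (J - {j0}) = k * q" using cJ j0J finJ by simp
    have "\<forall>x. \<exists>h. bij_betw h (Ix x) (J - {j0})"
    proof
      fix x
      show "\<exists>h. bij_betw h (Ix x) (J - {j0})"
        by (rule finite_same_card_bij) (use cIx cJ' finJ in \<open>auto simp: Ix_def\<close>)
    qed
    then obtain pi where pi: "\<And>x. bij_betw (pi x) (Ix x) (J - {j0})" by metis
    define pii where "pii x = the_inv_into (Ix x) (pi x)" for x
    have IxN: "Ix x \<subseteq> {..<N}" for x using iota(1) unfolding Ix_def by auto
    have lay: "lay T Qs Os Ps s d (Ix x) J j0 (pi x) (pii x)" for x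
    proof
      show "T = Qs \<union> Os" by (rule TQO)
      show "(\<lambda>t. s + t) ` T = Os \<union> Ps" by (rule Ts)
      show "Qs \<inter> Os = {}" "Qs \<inter> Ps = {}" "Os \<inter> Ps = {}" by (fact dQO, fact dQP, fact dOP)
      show "Ix x \<subseteq> {..<d}" using IxN[of x] dN by auto
      show "J \<subseteq> {..<d}" using J by auto
      show "Ix x \<inter> J = {}" using IxN[of x] J by fastforce
      show "j0 \<in> J" by (rule j0J)
    next
      fix i assume i: "i \<in> Ix x"
      have inj: "inj_on (pi x) (Ix x)" using pi[of x] by (simp add: bij_betw_def)
      have pJ: "pi x i \<in> J - {j0}" using pi[of x] i by (auto simp: bij_betw_def)
      have "i < N" using IxN[of x] i by auto
      moreover have "N \<le> pi x i" using pJ J by auto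
      ultimately show "pi x i \<in> J \<and> pi x i \<noteq> j0 \<and> i < pi x i \<and> pii x (pi x i) = i"
        using pJ the_inv_into_f_f[OF inj i] unfolding pii_def by auto
    next
      fix j assume j: "j \<in> J" "j \<noteq> j0"
      have inj: "inj_on (pi x) (Ix x)" using pi[of x] by (simp add: bij_betw_def)
      have im: "j \<in> pi x ` Ix x" using pi[of x] j by (auto simp: bij_betw_def)
      show "pii x j \<in> Ix x \<and> pi x (pii x j) = j"
        using the_inv_into_into[OF inj im subset_refl] f_the_inv_into_f[OF inj im] unfolding pii_def by auto
    qed
    have LamE: "lay.Lam Qs Os Ps d (Ix x) J = {y. length y = d \<and> set y \<subseteq> Qs \<union> Os \<union> Ps \<and>
        (\<forall>j\<in>J. y \<notin> box Qs d Ps j) \<and> (\<forall>i\<in>Ix x. y \<notin> box Qs d Os i)}" for x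
      using lay.Lam_def[OF lay[of x]] lay.bx_def[OF lay[of x]] unfolding box_def by simp
    define hostc where "hostc x y \<longleftrightarrow> (\<exists>g l. l < q \<and> y \<in> box Qs d Os (iota (g, l)) \<and> x - g \<in> T)" for x y
    define hg where "hg y = (SOME g. \<exists>l<q. y \<in> box Qs d Os (iota (g, l)))" for y
    have hg_eq: "hg y = g" if "l < q" "y \<in> box Qs d Os (iota (g, l))" for y g l
    proof -
      have uniq: "g' = g" if "l' < q" "y \<in> box Qs d Os (iota (g', l'))" for g' l'
      proof -
        have "iota (g', l') < N" "iota (g, l) < N"
          using iota(1) \<open>l < q\<close> \<open>l' < q\<close> by auto
        then have a: "iota (g', l') < d" "iota (g, l) < d" using dN by auto
        have "iota (g', l') = iota (g, l)"
          using box_disj[OF \<open>y \<in> box Qs d Os (iota (g', l'))\<close> \<open>y \<in> box Qs d Os (iota (g, l))\<close> a dQO] .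
        then have "(g', l') = (g, l)" using iota(2) \<open>l < q\<close> \<open>l' < q\<close> by (auto dest: inj_onD)
        then show ?thesis by simp
      qed
      have "\<exists>l<q. y \<in> box Qs d Os (iota (g, l))" using that by blast
      then have "\<exists>l<q. y \<in> box Qs d Os (iota (hg y, l))" unfolding hg_def by (rule someI)
      then show ?thesis using uniq by blast
    qed
    define dr where "dr z = (if hostc (hd z) (tl z) then 0
       else Suc (lay.ldir Qs Os (Ix (hd z)) J j0 (pi (hd z)) (pii (hd z)) (tl z)))" for z
    define bs where "bs z = (if hostc (hd z) (tl z) then hg (tl z)
       else lay.lbas Qs Os s (Ix (hd z)) J (pi (hd z)) (tl z))" for z
    have key: "dr z < Suc d \<and> z ! dr z - bs z \<in> T \<and> (\<forall>t\<in>T. z[dr z := bs z + t] \<in> ?Z \<and>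
       dr (z[dr z := bs z + t]) = dr z \<and> bs (z[dr z := bs z + t]) = bs z)" if z: "z \<in> ?Z" for z
    proof -
      obtain x y where zxy: "z = x # y" and yA: "y \<in> power_set (Qs \<union> Os \<union> Ps) d"
        and yJ: "y \<notin> \<Union> (box Qs d Ps ` J)" using z by auto
      show ?thesis
      proof (cases "hostc x y")
        case True
        then obtain g l where gl: "l < q" "y \<in> box Qs d Os (iota (g, l))" "x - g \<in> T"
          unfolding hostc_def by blast
        have hgy: "hg y = g" by (rule hg_eq[OF gl(1,2)])
        have dz: "dr z = 0" "bs z = g" using True hgy unfolding dr_def bs_def zxy by auto
        show ?thesis
        proof (simp only: dz, intro conjI ballI)
          show "(0::nat) < Suc d" by simp
          show "z ! 0 - g \<in> T" using gl(3) zxy by simp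
          fix t assume t: "t \<in> T"
          have z': "z[0 := g + t] = (g + t) # y" using zxy by simp
          have "g + t - g = t" by simp
          then have hc: "hostc (g + t) y" unfolding hostc_def using gl t by metis
          show "z[0 := g + t] \<in> ?Z" using z' yA yJ by auto
          show "dr (z[0 := g + t]) = 0" using z' hc unfolding dr_def by simp
          show "bs (z[0 := g + t]) = g" using z' hc hgy unfolding bs_def by simp
        qed
      next
        case False
        let ?ld = "lay.ldir Qs Os (Ix x) J j0 (pi x) (pii x)"
        let ?lb = "lay.lbas Qs Os s (Ix x) J (pi x)"
        let ?L = "lay.Lam Qs Os Ps d (Ix x) J"
        have dz: "dr z = Suc (?ld y)" "bs z = ?lb y" using False unfolding dr_def bs_def zxy by auto
        have nhost: "y \<notin> box Qs d Os i" if iI: "i \<in> Ix x" for i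
        proof
          assume yb: "y \<in> box Qs d Os i"
          obtain g l where "i = iota (g, l)" "x - g \<in> T" "l < q" using iI unfolding Ix_def by auto
          then have "hostc x y" unfolding hostc_def using yb by blast
          then show False using False by simp
        qed
        have yL: "y \<in> ?L" unfolding LamE mem_Collect_eq using yA yJ nhost unfolding power_set_def by blast
        have cl: "?ld y < d \<and> y ! ?ld y - ?lb y \<in> T \<and> (\<forall>t\<in>T. y[?ld y := ?lb y + t] \<in> ?L
            \<and> ?ld (y[?ld y := ?lb y + t]) = ?ld y \<and> ?lb (y[?ld y := ?lb y + t]) = ?lb y)"
          by (rule lay.closure[OF lay yL])
        show ?thesis
        proof (simp only: dz, intro conjI ballI)
          show "Suc (?ld y) < Suc d" using cl by simp
          show "z ! Suc (?ld y) - ?lb y \<in> T" using cl zxy by simp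
          fix t assume t: "t \<in> T"
          have z': "z[Suc (?ld y) := ?lb y + t] = x # y[?ld y := ?lb y + t]" using zxy by simp
          have yL': "y[?ld y := ?lb y + t] \<in> ?L" using cl t by blast
          have nh': "\<not> hostc x (y[?ld y := ?lb y + t])"
          proof
            assume "hostc x (y[?ld y := ?lb y + t])"
            then obtain g l where "l < q" "y[?ld y := ?lb y + t] \<in> box Qs d Os (iota (g, l))" "x - g \<in> T"
              unfolding hostc_def by blast
            moreover have "iota (g, l) \<in> Ix x" unfolding Ix_def using \<open>l < q\<close> \<open>x - g \<in> T\<close> by auto
            ultimately show False using yL' unfolding LamE by blast
          qed
          have "y[?ld y := ?lb y + t] \<in> power_set (Qs \<union> Os \<union> Ps) d - \<Union> (box Qs d Ps ` J)"
            using yL' unfolding LamE power_set_def by blast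
          then show "z[Suc (?ld y) := ?lb y + t] \<in> ?Z" using z' by blast
          show "dr (z[Suc (?ld y) := ?lb y + t]) = Suc (?ld y)"
            using z' nh' cl t unfolding dr_def by simp
          show "bs (z[Suc (?ld y) := ?lb y + t]) = ?lb y"
            using z' nh' cl t unfolding bs_def by simp
        qed
      qed
    qed
    show ?thesis
    proof (rule tilable_rule[where dr = dr and bs = bs])
      fix z assume "z \<in> ?Z" then show "length z = Suc d" by (rule lenZ)
    next
      fix z assume "z \<in> ?Z" then show "dr z < Suc d" using key by blast
    next
      fix z assume "z \<in> ?Z" then show "z ! dr z - bs z \<in> T" using key by blast
    next
      fix z t assume "z \<in> ?Z" "t \<in> T"
      then show "z[dr z := bs z + t] \<in> ?Z \<and> dr (z[dr z := bs z + t]) = dr z \<and> bs (z[dr z := bs z + t]) = bs z"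
        using key by blast
    qed
  qed
qed


theorem lemma9:
  fixes T :: "'g::{ab_group_add, finite} set"
  assumes "T \<noteq> {}" and "T \<noteq> UNIV"
  shows "\<exists>A. T \<subset> A \<and>
    (\<forall>d0::nat. d0 \<ge> 1 \<longrightarrow>
      (\<exists>d F. d \<ge> d0 \<and> card F \<ge> d0 \<and> finite F \<and>
         (\<forall>S\<in>F. S \<subseteq> power_set A d) \<and> pairwise disjnt F \<and>
         (\<forall>S. S \<subseteq> F \<and> card S mod card T = 1 mod card T \<longrightarrow>
            tilable T (Suc d) {g # xs | g xs. xs \<in> power_set A d - \<Union>S})))"
proof -
  obtain s where s: "(\<lambda>t. s + t) ` T \<noteq> T"
  proof -
    have False if all: "\<forall>s. (\<lambda>t. s + t) ` T = T"
    proof -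
      obtain t0 where t0: "t0 \<in> T" using assms(1) by auto
      have "UNIV \<subseteq> T"
      proof
        fix g :: 'g
        have "(g - t0) + t0 \<in> (\<lambda>t. (g - t0) + t) ` T" using t0 by blast
        then have "(g - t0) + t0 \<in> T" using all by metis
        then show "g \<in> T" by simp
      qed
      then show False using assms(2) by auto
    qed
    then show ?thesis using that by blast
  qed
  define T' where "T' = (\<lambda>t. s + t) ` T"
  define Qs where "Qs = T - T'"
  define Os where "Os = T \<inter> T'"
  define Ps where "Ps = T' - T"
  define A where "A = T \<union> T'"
  have cT': "card T' = card T" unfolding T'_def by (rule card_image) (rule inj_onI, simp)
  have Psne: "Ps \<noteq> {}"
  proof
    assume "Ps = {}"
    then have "T' \<subseteq> T" unfolding Ps_def by auto
    then have "T' = T" using card_subset_eq[of T T'] cT' by simp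
    then show False using s T'_def by simp
  qed
  have Qsne: "Qs \<noteq> {}"
  proof
    assume "Qs = {}"
    then have "T \<subseteq> T'" unfolding Qs_def by auto
    then have "T = T'" using card_subset_eq[of T' T] cT' by simp
    then show False using s T'_def by simp
  qed
  have A_eq: "Qs \<union> Os \<union> Ps = A" unfolding Qs_def Os_def Ps_def A_def by auto
  have TQO: "T = Qs \<union> Os" unfolding Qs_def Os_def by auto
  have Ts: "(\<lambda>t. s + t) ` T = Os \<union> Ps" unfolding Os_def Ps_def T'_def by auto
  have dQO: "Qs \<inter> Os = {}" and dQP: "Qs \<inter> Ps = {}" and dOP: "Os \<inter> Ps = {}"
    unfolding Qs_def Os_def Ps_def by auto
  have TA: "T \<subset> A"
  proof -
    have "T \<subseteq> A" unfolding A_def by auto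
    moreover obtain p where "p \<in> Ps" using Psne by auto
    then have "p \<in> A" "p \<notin> T" unfolding Ps_def A_def by auto
    ultimately show ?thesis by blast
  qed
  obtain p0 where p0: "p0 \<in> Ps" using Psne by auto
  obtain q0 where q0: "q0 \<in> Qs" using Qsne by auto
  show ?thesis
  proof (intro exI[of _ A] conjI allI impI)
    show "T \<subset> A" by (rule TA)
    fix d0 :: nat assume "d0 \<ge> 1"
    define m where "m = d0"
    define N where "N = card (UNIV::'g set) * m"
    define d where "d = N + m"
    define C where "C = box Qs d Ps"
    define F where "F = C ` {N..<d}"
    have Cdisj: "C j \<inter> C j' = {}" if "j < d" "j' < d" "j \<noteq> j'" for j j'
      using box_disj[of _ Qs d Ps j Ps j'] that dQP unfolding C_def by blast
    have Cne: "C j \<noteq> {}" if "j < d" for j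
    proof -
      have "map (\<lambda>l. if l = j then p0 else q0) [0..<d] \<in> C j"
        unfolding C_def box_def using that p0 q0 by auto
      then show ?thesis by blast
    qed
    have injC: "inj_on C {N..<d}"
    proof (rule inj_onI)
      fix j j' assume j: "j \<in> {N..<d}" and j': "j' \<in> {N..<d}" and e: "C j = C j'"
      show "j = j'"
      proof (rule ccontr)
        assume "j \<noteq> j'"
        then have "C j \<inter> C j' = {}" using Cdisj j j' by auto
        then show False using e Cne j by auto
      qed
    qed
    have cardF: "card F = m" unfolding F_def using card_image[OF injC] d_def by simp
    have CA: "C j \<subseteq> power_set A d" for j
    proof
      fix y assume y: "y \<in> C j"
      have "set y \<subseteq> A"
      proof
        fix a assume "a \<in> set y"
        then obtain l where l: "l < length y" "y ! l = a" by (auto simp: in_set_conv_nth)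
        then show "a \<in> A" using y unfolding C_def box_def A_eq[symmetric] by (cases "l = j") auto
      qed
      then show "y \<in> power_set A d" using y unfolding C_def box_def power_set_def by auto
    qed
    show "\<exists>d F. d \<ge> d0 \<and> card F \<ge> d0 \<and> finite F \<and>
         (\<forall>S\<in>F. S \<subseteq> power_set A d) \<and> pairwise disjnt F \<and>
         (\<forall>S. S \<subseteq> F \<and> card S mod card T = 1 mod card T \<longrightarrow>
            tilable T (Suc d) {g # xs | g xs. xs \<in> power_set A d - \<Union>S})"
    proof (intro exI[of _ d] exI[of _ F] conjI allI impI ballI)
      show "d0 \<le> d" unfolding d_def m_def by simp
      show "d0 \<le> card F" using cardF m_def by simp
      show "finite F" unfolding F_def by simp
      show "S \<subseteq> power_set A d" if "S \<in> F" for S using that CA unfolding F_def by auto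
      show "pairwise disjnt F"
      proof (rule pairwiseI)
        fix S1 S2 assume "S1 \<in> F" "S2 \<in> F" "S1 \<noteq> S2"
        moreover obtain j1 where "j1 \<in> {N..<d}" "S1 = C j1" using \<open>S1 \<in> F\<close> unfolding F_def by auto
        moreover obtain j2 where "j2 \<in> {N..<d}" "S2 = C j2" using \<open>S2 \<in> F\<close> unfolding F_def by auto
        ultimately have "j1 \<in> {N..<d}" "j2 \<in> {N..<d}" "S1 = C j1" "S2 = C j2" "j1 \<noteq> j2" by auto
        then show "disjnt S1 S2" using Cdisj unfolding disjnt_def by auto
      qed
    next
      fix S assume SF: "S \<subseteq> F \<and> card S mod card T = 1 mod card T"
      define J where "J = {j \<in> {N..<d}. C j \<in> S}"
      have SJ: "S = C ` J" using SF unfolding J_def F_def by auto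
      have cS: "card S = card J" unfolding SJ
        by (rule card_image) (rule inj_on_subset[OF injC], auto simp: J_def)
      have Jsub: "J \<subseteq> {N..<d}" unfolding J_def by auto
      have Jc: "card J mod card T = 1 mod card T" using SF cS by simp
      have "tilable T (Suc d) {g # xs | g xs. xs \<in> power_set (Qs \<union> Os \<union> Ps) d - \<Union> (box Qs d Ps ` J)}"
        by (rule main_tile[OF TQO Ts dQO dQP dOP assms(1) N_def d_def Jsub Jc])
      then show "tilable T (Suc d) {g # xs | g xs. xs \<in> power_set A d - \<Union>S}"
        unfolding A_eq SJ C_def .
    qed
  qed
qed

end
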